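(* Suppose $n$ is odd. Let $\ell$ be the smallest integer $\ge0$ such that $a_{\ell+1}\neq0$, and let $\lambda:=[\ell/2]$. Then the $(n+1)/2$ functions $J_1,\dots,J_\lambda,\ H,\ F_{\lambda+2},F_{\lambda+3},\dots,F_{(n-1)/2},\ C$ are pairwise in involution with respect to $\{\cdot,\cdot\}$ and functionally independent (their differentials are linearly independent on a dense open subset of $\mathbb R^n$). Hence they define a Liouville integrable system on $(\mathbb R^n,\{\cdot,\cdot\})$ (whose Poisson structure has rank $n-1$).
   Context: Let $n\ge1$, $(a_1,\dots,a_n)\in\mathbb R^n\setminus\{0\}$. On $\mathbb R^n$ with coordinates $x_1,\dots,x_n$ consider the Poisson bracket $\{x_i,x_j\}=x_ix_j$ for $1\le i<j\le n$ (extended by skew-symmetry and the Leibniz rule; rational functions are considered on the open dense set where their denominators do not vanish). Let $H=a_1x_1+\dots+a_nx_n$, $v_0:=0$ and $v_i:=a_1x_1+\dots+a_ix_i$ for $i=1,\dots,n$. For $k=1,\dots,[n/2]$ let $J_k:=\dfrac{x_1x_3\cdots x_{2k-1}}{x_2x_4\cdots x_{2k}}$. For $n$ odd and $k=1,\dots,(n+1)/2$ let $F_k:=v_{2k-1}\dfrac{x_{2k+1}x_{2k+3}\cdots x_n}{x_{2k}x_{2k+2}\cdots x_{n-1}}$ (empty product $=1$, so $F_{(n+1)/2}=H$), and let $C:=\dfrac{x_1x_3\cdots x_n}{x_2x_4\cdots x_{n-1}}$. *)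

theory Defs
  imports "HOL-Analysis.Analysis"
begin

text \<open>Points of R^n are modelled as functions x :: nat => real, where x i is the
coordinate x_i for 1 <= i <= n; R^n itself is the subspace Rn n of those x that
vanish outside {1..n}, with the (product) topology inherited from nat => real,
which on Rn n is the Euclidean topology.\<close>

definition Rn :: "nat \<Rightarrow> (nat \<Rightarrow> real) set" where
  "Rn n = {x. \<forall>i. i \<notin> {1..n} \<longrightarrow> x i = 0}"

text \<open>Open dense set on which all rational functions involved are defined (all
coordinates nonzero).\<close>
definition torus :: "nat \<Rightarrow> (nat \<Rightarrow> real) set" where
  "torus n = {x \<in> Rn n. \<forall>i\<in>{1..n}. x i \<noteq> 0}"

definition pd :: "((nat \<Rightarrow> real) \<Rightarrow> real) \<Rightarrow> nat \<Rightarrow> (nat \<Rightarrow> real) \<Rightarrow> real" where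
  "pd f i x = deriv (\<lambda>t. f (x(i := t))) (x i)"

definition ptensor :: "nat \<Rightarrow> nat \<Rightarrow> (nat \<Rightarrow> real) \<Rightarrow> real" where
  "ptensor i j x = (if i < j then x i * x j else if j < i then - (x i * x j) else 0)"

definition pbracket :: "nat \<Rightarrow> ((nat \<Rightarrow> real) \<Rightarrow> real) \<Rightarrow> ((nat \<Rightarrow> real) \<Rightarrow> real)
    \<Rightarrow> (nat \<Rightarrow> real) \<Rightarrow> real" where
  "pbracket n f g x = (\<Sum>i=1..n. \<Sum>j=1..n. ptensor i j x * pd f i x * pd g j x)"

definition vv :: "(nat \<Rightarrow> real) \<Rightarrow> nat \<Rightarrow> (nat \<Rightarrow> real) \<Rightarrow> real" where
  "vv a i x = (\<Sum>j=1..i. a j * x j)"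

definition HH :: "(nat \<Rightarrow> real) \<Rightarrow> nat \<Rightarrow> (nat \<Rightarrow> real) \<Rightarrow> real" where
  "HH a n x = vv a n x"

definition JJ :: "nat \<Rightarrow> (nat \<Rightarrow> real) \<Rightarrow> real" where
  "JJ k x = (\<Prod>i=1..k. x (2*i - 1)) / (\<Prod>i=1..k. x (2*i))"

definition FF :: "(nat \<Rightarrow> real) \<Rightarrow> nat \<Rightarrow> nat \<Rightarrow> (nat \<Rightarrow> real) \<Rightarrow> real" where
  "FF a n k x = vv a (2*k - 1) x * (\<Prod>i\<in>{k..(n-1) div 2}. x (2*i + 1))
                 / (\<Prod>i\<in>{k..(n-1) div 2}. x (2*i))"

definition CC :: "nat \<Rightarrow> (nat \<Rightarrow> real) \<Rightarrow> real" where
  "CC n x = (\<Prod>i\<in>{0..(n-1) div 2}. x (2*i + 1)) / (\<Prod>i\<in>{1..(n-1) div 2}. x (2*i))"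

definition fam :: "(nat \<Rightarrow> real) \<Rightarrow> nat \<Rightarrow> nat \<Rightarrow> ((nat \<Rightarrow> real) \<Rightarrow> real) list" where
  "fam a n lam = map (\<lambda>k. JJ k) [1..<lam + 1] @ [HH a n]
      @ map (\<lambda>k. FF a n k) [lam + 2..<(n - 1) div 2 + 1] @ [CC n]"

definition diffs_indep :: "nat \<Rightarrow> ((nat \<Rightarrow> real) \<Rightarrow> real) list \<Rightarrow> (nat \<Rightarrow> real) \<Rightarrow> bool" where
  "diffs_indep n fs x \<longleftrightarrow>
     (\<forall>c :: nat \<Rightarrow> real. (\<forall>i\<in>{1..n}. (\<Sum>k<length fs. c k * pd (fs ! k) i x) = 0)
        \<longrightarrow> (\<forall>k<length fs. c k = 0))"

end

theory Submission
  imports Defs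
begin


definition alt :: "nat \<Rightarrow> nat \<Rightarrow> nat \<Rightarrow> real" where
  "alt lo hi i = (if lo \<le> i \<and> i \<le> hi then (if odd i then 1 else -1) else 0)"

lemma pd_affine:
  assumes "\<And>t. f (x(i:=t)) = f x + c * (t - x i)"
  shows "pd f i x = c"
proof -
  have e: "(\<lambda>t. f (x(i:=t))) = (\<lambda>t. f x + c * (t - x i))" using assms by auto
  have "((\<lambda>t. f x + c * (t - x i)) has_field_derivative c) (at (x i))"
    by (auto intro!: derivative_eq_intros)
  then show ?thesis unfolding pd_def e by (rule DERIV_imp_deriv)
qed

lemma pd_mono:
  assumes xi: "x i \<noteq> 0" and AB: "\<not> (A \<and> B)"
    and eq: "\<And>t. t \<noteq> 0 \<Longrightarrow> f (x(i:=t)) = f x * (if A then t else x i) / (if B then t else x i)"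
  shows "x i * pd f i x = (if A then 1 else if B then -1 else 0) * f x"
proof -
  have xin: "x i \<in> - {0::real}" using xi by auto
  have op: "open (- {0::real})" by auto
  consider "A" | "B" | "\<not>A" "\<not>B" by blast
  then show ?thesis
  proof cases
    case 1
    then have "\<not>B" using AB by blast
    have d: "((\<lambda>t. f x * t / x i) has_field_derivative f x / x i) (at (x i))"
      using xi by (auto intro!: derivative_eq_intros)
    have "((\<lambda>t. f (x(i:=t))) has_field_derivative f x / x i) (at (x i))"
      by (rule has_field_derivative_transform_within_open[OF d op xin]) (use eq 1 \<open>\<not>B\<close> xi in auto)
    then have "pd f i x = f x / x i" unfolding pd_def by (rule DERIV_imp_deriv)
    then show ?thesis using 1 xi by simp
  next
    case 2
    then have "\<not>A" using AB by blast
    have d: "((\<lambda>t. f x * x i / t) has_field_derivative - (f x * x i) / (x i * x i)) (at (x i))"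
      using xi by (auto intro!: derivative_eq_intros simp: power2_eq_square)
    have "((\<lambda>t. f (x(i:=t))) has_field_derivative - (f x * x i) / (x i * x i)) (at (x i))"
      by (rule has_field_derivative_transform_within_open[OF d op xin]) (use eq 2 \<open>\<not>A\<close> in auto)
    then have "pd f i x = - (f x * x i) / (x i * x i)" unfolding pd_def by (rule DERIV_imp_deriv)
    then show ?thesis using 2 \<open>\<not>A\<close> xi by simp
  next
    case 3
    have d: "((\<lambda>t. f x) has_field_derivative 0) (at (x i))"
      by (auto intro!: derivative_eq_intros)
    have "((\<lambda>t. f (x(i:=t))) has_field_derivative 0) (at (x i))"
      by (rule has_field_derivative_transform_within_open[OF d op xin]) (use eq 3 xi in auto)
    then have "pd f i x = 0" unfolding pd_def by (rule DERIV_imp_deriv)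
    then show ?thesis using 3 by simp
  qed
qed

lemma prod_upd:
  assumes "finite P" "inj_on g P"
  shows "(\<Prod>p\<in>P. (x(i:=t)) (g p)) * x i = (\<Prod>p\<in>P. x (g p)) * (if i \<in> g ` P then t else x i)"
proof (cases "i \<in> g ` P")
  case True
  then obtain q where q: "q \<in> P" "g q = i" by auto
  have o: "\<And>p. p \<in> P - {q} \<Longrightarrow> (x(i:=t)) (g p) = x (g p)"
    using assms(2) q by (auto dest: inj_onD)
  have "(\<Prod>p\<in>P. (x(i:=t)) (g p)) = (x(i:=t)) (g q) * (\<Prod>p\<in>P-{q}. (x(i:=t)) (g p))"
    by (rule prod.remove[OF assms(1) q(1)])
  also have "\<dots> = t * (\<Prod>p\<in>P-{q}. (x(i:=t)) (g p))" using q by simp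
  also have "\<dots> = t * (\<Prod>p\<in>P-{q}. x (g p))" using o by simp
  finally have 1: "(\<Prod>p\<in>P. (x(i:=t)) (g p)) = t * (\<Prod>p\<in>P-{q}. x (g p))" .
  have 2: "(\<Prod>p\<in>P. x (g p)) = x (g q) * (\<Prod>p\<in>P-{q}. x (g p))"
    by (rule prod.remove[OF assms(1) q(1)])
  show ?thesis using 1 2 True q by (simp add: mult_ac)
next
  case False
  then have "\<And>p. p \<in> P \<Longrightarrow> (x(i:=t)) (g p) = x (g p)" by auto
  then show ?thesis using False by simp
qed

lemma img_odd1: "(i::nat) \<in> (\<lambda>p. 2*p - 1) ` {1..k} \<longleftrightarrow> odd i \<and> 1 \<le> i \<and> i \<le> 2*k"
proof
  assume "odd i \<and> 1 \<le> i \<and> i \<le> 2*k"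
  then show "i \<in> (\<lambda>p. 2*p - 1) ` {1..k}"
    by (intro image_eqI[of _ _ "(i+1) div 2"]) (auto elim!: oddE)
qed auto

lemma img_even1: "(i::nat) \<in> (\<lambda>p. 2*p) ` {lo..k} \<longleftrightarrow> even i \<and> 2*lo \<le> i \<and> i \<le> 2*k"
proof
  assume "even i \<and> 2*lo \<le> i \<and> i \<le> 2*k"
  then show "i \<in> (\<lambda>p. 2*p) ` {lo..k}"
    by (intro image_eqI[of _ _ "i div 2"]) (auto elim!: evenE)
qed auto

lemma img_odd2: "(i::nat) \<in> (\<lambda>p. 2*p+1) ` {lo..k} \<longleftrightarrow> odd i \<and> 2*lo+1 \<le> i \<and> i \<le> 2*k+1"
proof
  assume "odd i \<and> 2*lo+1 \<le> i \<and> i \<le> 2*k+1"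
  then show "i \<in> (\<lambda>p. 2*p+1) ` {lo..k}"
    by (intro image_eqI[of _ _ "i div 2"]) (auto elim!: oddE)
qed auto

lemma inj_odd1: "inj_on (\<lambda>p::nat. 2*p - 1) {1..k}" by (auto simp: inj_on_def)
lemma inj_even: "inj_on (\<lambda>p::nat. 2*p) S" by (auto simp: inj_on_def)
lemma inj_odd2: "inj_on (\<lambda>p::nat. 2*p+1) S" by (auto simp: inj_on_def)

lemma quot_upd:
  assumes "xi \<noteq> 0" "Nt * xi = N * rA" "Dt * xi = D * rB"
  shows "Nt / Dt = N / D * rA / (rB::real)"
proof -
  have "Nt = N * rA / xi" by (metis assms(1) assms(2) nonzero_mult_div_cancel_right)
  moreover have "Dt = D * rB / xi" by (metis assms(1) assms(3) nonzero_mult_div_cancel_right)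
  ultimately show ?thesis using assms(1) by simp
qed

lemma vv_upd: "vv a r (x(i:=t)) = vv a r x + (if 1 \<le> i \<and> i \<le> r then a i * (t - x i) else 0)"
proof -
  have "\<And>j. a j * (x(i:=t)) j = a j * x j + (if j = i then a i * (t - x i) else 0)"
    by (auto simp: algebra_simps)
  then have "vv a r (x(i:=t)) = (\<Sum>j=1..r. a j * x j + (if j = i then a i * (t - x i) else 0))"
    unfolding vv_def by simp
  also have "\<dots> = vv a r x + (if 1 \<le> i \<and> i \<le> r then a i * (t - x i) else 0)"
    unfolding vv_def sum.distrib by simp
  finally show ?thesis .
qed

lemma Df_JJ:
  assumes xi: "x i \<noteq> 0"
  shows "x i * pd (JJ k) i x = alt 1 (2*k) i * JJ k x"
proof -
  let ?A = "i \<in> (\<lambda>p. 2*p-1) ` {1..k}"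
  let ?B = "i \<in> (\<lambda>p. 2*p) ` {1..k}"
  have eq: "JJ k (x(i:=t)) = JJ k x * (if ?A then t else x i) / (if ?B then t else x i)" for t
    unfolding JJ_def
    by (rule quot_upd[OF xi prod_upd[where P="{1..k}" and x=x and i=i and t=t, OF finite_atLeastAtMost inj_odd1] prod_upd[where P="{1..k}" and x=x and i=i and t=t, OF finite_atLeastAtMost inj_even]])
  have AB: "\<not>(?A \<and> ?B)" by (auto simp: img_odd1 img_even1)
  have A: "?A \<longleftrightarrow> odd i \<and> 1 \<le> i \<and> i \<le> 2*k" by (rule img_odd1)
  have B: "?B \<longleftrightarrow> even i \<and> 2*1 \<le> i \<and> i \<le> 2*k" by (rule img_even1)
  have "x i * pd (JJ k) i x = (if odd i \<and> 1 \<le> i \<and> i \<le> 2*k then 1 else if even i \<and> 2*1 \<le> i \<and> i \<le> 2*k then -1 else 0) * JJ k x"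
    using pd_mono[OF xi AB eq] unfolding A B .
  then show ?thesis by (auto simp add: alt_def)
qed

lemma Df_CC:
  assumes xi: "x i \<noteq> 0" and n: "odd n"
  shows "x i * pd (CC n) i x = alt 1 n i * CC n x"
proof -
  let ?m = "(n-1) div 2"
  let ?A = "i \<in> (\<lambda>p. 2*p+1) ` {0..?m}"
  let ?B = "i \<in> (\<lambda>p. 2*p) ` {1..?m}"
  have eq: "CC n (x(i:=t)) = CC n x * (if ?A then t else x i) / (if ?B then t else x i)" for t
    unfolding CC_def
    by (rule quot_upd[OF xi prod_upd[where P="{0..?m}" and x=x and i=i and t=t, OF finite_atLeastAtMost inj_odd2] prod_upd[where P="{1..?m}" and x=x and i=i and t=t, OF finite_atLeastAtMost inj_even]])
  have AB: "\<not>(?A \<and> ?B)" by (auto simp: img_odd2 img_even1)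
  have A: "?A \<longleftrightarrow> odd i \<and> 2*0+1 \<le> i \<and> i \<le> 2*?m+1" by (rule img_odd2)
  have B: "?B \<longleftrightarrow> even i \<and> 2*1 \<le> i \<and> i \<le> 2*?m" by (rule img_even1)
  have "x i * pd (CC n) i x = (if odd i \<and> 2*0+1 \<le> i \<and> i \<le> 2*?m+1 then 1 else if even i \<and> 2*1 \<le> i \<and> i \<le> 2*?m then -1 else 0) * CC n x"
    using pd_mono[OF xi AB eq] unfolding A B .
  moreover have "2 * ((n - 1) div 2) + 1 = n" using n by presburger
  moreover have "(if odd i \<and> 2*0+1 \<le> i \<and> i \<le> 2*?m+1 then 1 else if even i \<and> 2*1 \<le> i \<and> i \<le> 2*?m then -1 else 0) = alt 1 n i"
    unfolding alt_def using n by (auto; presburger)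
  ultimately show ?thesis by simp
qed

definition MM :: "nat \<Rightarrow> nat \<Rightarrow> (nat \<Rightarrow> real) \<Rightarrow> real" where
  "MM n k x = (\<Prod>i\<in>{k..(n-1) div 2}. x (2*i + 1)) / (\<Prod>i\<in>{k..(n-1) div 2}. x (2*i))"

lemma FF_MM: "FF a n k x = vv a (2*k-1) x * MM n k x"
  unfolding FF_def MM_def by simp

lemma MM_upd:
  assumes xi: "x i \<noteq> 0"
  shows "MM n k (x(i:=t)) = MM n k x * (if i \<in> (\<lambda>p. 2*p+1) ` {k..(n-1) div 2} then t else x i)
            / (if i \<in> (\<lambda>p. 2*p) ` {k..(n-1) div 2} then t else x i)"
  unfolding MM_def
  by (rule quot_upd[OF xi prod_upd[where P="{k..(n-1) div 2}" and x=x and i=i and t=t, OF finite_atLeastAtMost inj_odd2] prod_upd[where P="{k..(n-1) div 2}" and x=x and i=i and t=t, OF finite_atLeastAtMost inj_even]])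

lemma Df_FF:
  assumes xi: "x i \<noteq> 0" and n: "odd n" and k: "1 \<le> k"
  shows "x i * pd (FF a n k) i x = (if 1 \<le> i \<and> i \<le> 2*k-1 then a i * x i else 0) * MM n k x
            + alt (2*k) n i * FF a n k x"
proof (cases "1 \<le> i \<and> i \<le> 2*k-1")
  case True
  have nA: "\<not> i \<in> (\<lambda>p. 2*p+1) ` {k..(n-1) div 2}" unfolding img_odd2 using True by auto
  have nB: "\<not> i \<in> (\<lambda>p. 2*p) ` {k..(n-1) div 2}" unfolding img_even1 using True by auto
  have "MM n k (x(i:=t)) = MM n k x" for t
    using MM_upd[where x=x and i=i and n=n and k=k and t=t, OF xi] nA nB xi by simp
  then have "FF a n k (x(i:=t)) = FF a n k x + (a i * MM n k x) * (t - x i)" for t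
    unfolding FF_MM vv_upd using True by (simp add: algebra_simps)
  then have "pd (FF a n k) i x = a i * MM n k x" by (rule pd_affine)
  moreover have "alt (2*k) n i = 0" using True by (auto simp: alt_def)
  ultimately show ?thesis using True by simp
next
  case False
  let ?A = "i \<in> (\<lambda>p. 2*p+1) ` {k..(n-1) div 2}"
  let ?B = "i \<in> (\<lambda>p. 2*p) ` {k..(n-1) div 2}"
  have eq: "FF a n k (x(i:=t)) = FF a n k x * (if ?A then t else x i) / (if ?B then t else x i)" for t
  proof -
    have vvu: "vv a (2*k-1) (x(i:=t)) = vv a (2*k-1) x" unfolding vv_upd if_not_P[OF False] by simp
    show ?thesis unfolding FF_MM vvu MM_upd[where x=x and i=i, OF xi] by simp
  qed
  have AB: "\<not>(?A \<and> ?B)" by (auto simp: img_odd2 img_even1)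
  let ?m = "(n-1) div 2"
  have A: "?A \<longleftrightarrow> odd i \<and> 2*k+1 \<le> i \<and> i \<le> 2*?m+1" by (rule img_odd2)
  have B: "?B \<longleftrightarrow> even i \<and> 2*k \<le> i \<and> i \<le> 2*?m" by (rule img_even1)
  have "x i * pd (FF a n k) i x = (if odd i \<and> 2*k+1 \<le> i \<and> i \<le> 2*?m+1 then 1 else if even i \<and> 2*k \<le> i \<and> i \<le> 2*?m then -1 else 0) * FF a n k x"
    using pd_mono[OF xi AB eq] unfolding A B .
  moreover have "2 * ((n - 1) div 2) + 1 = n" using n by presburger
  moreover have "(if odd i \<and> 2*k+1 \<le> i \<and> i \<le> 2*?m+1 then 1 else if even i \<and> 2*k \<le> i \<and> i \<le> 2*?m then -1 else 0) = alt (2*k) n i"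
    unfolding alt_def using n by (auto; presburger)
  ultimately show ?thesis unfolding if_not_P[OF False] by simp
qed

lemma Df_HH:
  shows "x i * pd (HH a n) i x = (if 1 \<le> i \<and> i \<le> n then a i * x i else 0)"
proof -
  have "HH a n (x(i:=t)) = HH a n x + (if 1 \<le> i \<and> i \<le> n then a i else 0) * (t - x i)" for t
    unfolding HH_def vv_upd by simp
  then have "pd (HH a n) i x = (if 1 \<le> i \<and> i \<le> n then a i else 0)" by (rule pd_affine)
  then show ?thesis by simp
qed



definition eps :: "nat \<Rightarrow> nat \<Rightarrow> real" where
  "eps i j = (if i < j then 1 else if j < i then -1 else 0)"

definition Sv :: "nat \<Rightarrow> (nat \<Rightarrow> real) \<Rightarrow> nat \<Rightarrow> real" where
  "Sv n u j = (\<Sum>i=1..n. eps i j * u i)"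

definition PP :: "nat \<Rightarrow> real" where "PP i = (if odd i then 1 else -1)"

lemma sum_PP: "(\<Sum>i\<in>{p..q}. PP i) = (if q < p then 0 else if even (q - p) then PP p else 0)"
proof (induction q)
  case 0
  then show ?case by (cases p) auto
next
  case (Suc q)
  show ?case
  proof (cases "Suc q < p")
    case True then show ?thesis by simp
  next
    case False
    show ?thesis
    proof (cases "p = Suc q")
      case True then show ?thesis by simp
    next
      case F2: False
      then have "p \<le> q" using False by simp
      then have "(\<Sum>i\<in>{p..Suc q}. PP i) = PP (Suc q) + (\<Sum>i\<in>{p..q}. PP i)"
        by (simp add: atLeastAtMostSuc_conv)
      also have "\<dots> = PP (Suc q) + (if even (q - p) then PP p else 0)" using Suc \<open>p \<le> q\<close> by simp
      also have "\<dots> = (if even (Suc q - p) then PP p else 0)"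
        using \<open>p \<le> q\<close> unfolding PP_def by (auto; presburger)
      finally show ?thesis using \<open>p \<le> q\<close> by simp
    qed
  qed
qed

lemma Sv_alt:
  assumes "1 \<le> lo" "hi \<le> n" "1 \<le> j"
  shows "Sv n (alt lo hi) j = (\<Sum>i\<in>{lo..min hi (j-1)}. PP i) - (\<Sum>i\<in>{max lo (Suc j)..hi}. PP i)"
proof -
  have "Sv n (alt lo hi) j = (\<Sum>i\<in>{lo..hi}. eps i j * PP i)"
    unfolding Sv_def
    by (rule sum.mono_neutral_cong_right) (use assms in \<open>auto simp: alt_def PP_def\<close>)
  also have "\<dots> = (\<Sum>i\<in>{lo..hi}. (if i < j then PP i else 0) - (if j < i then PP i else 0))"
    by (rule sum.cong) (auto simp: eps_def)
  also have "\<dots> = (\<Sum>i\<in>{lo..hi}. (if i < j then PP i else 0)) - (\<Sum>i\<in>{lo..hi}. (if j < i then PP i else 0))"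
    by (simp add: sum_subtractf)
  also have "(\<Sum>i\<in>{lo..hi}. (if i < j then PP i else 0)) = (\<Sum>i\<in>{lo..min hi (j-1)}. PP i)"
    by (rule sum.mono_neutral_cong_right) (use assms in auto)
  also have "(\<Sum>i\<in>{lo..hi}. (if j < i then PP i else 0)) = (\<Sum>i\<in>{max lo (Suc j)..hi}. PP i)"
    by (rule sum.mono_neutral_cong_right) (use assms in auto)
  finally show ?thesis .
qed

lemma Sv_altC:
  assumes "odd n" "j \<in> {1..n}"
  shows "Sv n (alt 1 n) j = 0"
proof -
  have e: "Sv n (alt 1 n) j = (\<Sum>i\<in>{1..min n (j-1)}. PP i) - (\<Sum>i\<in>{max 1 (Suc j)..n}. PP i)"
    by (rule Sv_alt) (use assms in auto)
  show ?thesis unfolding e sum_PP PP_def using assms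
    by (auto simp: max_def min_def; presburger)
qed

lemma Sv_altJ:
  assumes "2*k \<le> n" "j \<in> {1..n}"
  shows "Sv n (alt 1 (2*k)) j = (if j \<le> 2*k then 1 else 0)"
proof -
  have e: "Sv n (alt 1 (2*k)) j = (\<Sum>i\<in>{1..min (2*k) (j-1)}. PP i) - (\<Sum>i\<in>{max 1 (Suc j)..(2*k)}. PP i)"
    by (rule Sv_alt) (use assms in auto)
  show ?thesis unfolding e sum_PP PP_def using assms
    by (auto simp: max_def min_def; presburger)
qed

lemma Sv_altF:
  assumes "odd n" "1 \<le> l" "2*l \<le> n" "j \<in> {1..n}"
  shows "Sv n (alt (2*l) n) j = (if 2*l \<le> j then -1 else 0)"
proof -
  have e: "Sv n (alt (2*l) n) j = (\<Sum>i\<in>{(2*l)..min n (j-1)}. PP i) - (\<Sum>i\<in>{max (2*l) (Suc j)..n}. PP i)"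
    by (rule Sv_alt) (use assms in auto)
  show ?thesis unfolding e sum_PP PP_def using assms
    by (auto simp: max_def min_def; presburger)
qed



definition Eps :: "nat \<Rightarrow> (nat \<Rightarrow> real) \<Rightarrow> (nat \<Rightarrow> real) \<Rightarrow> real" where
  "Eps n u w = (\<Sum>j=1..n. Sv n u j * w j)"

lemma Eps_expand: "Eps n u w = (\<Sum>i=1..n. \<Sum>j=1..n. eps i j * u i * w j)"
  unfolding Eps_def Sv_def sum_distrib_right
  by (subst sum.swap) simp

lemma pbracket_Eps: "pbracket n f g x = Eps n (\<lambda>i. x i * pd f i x) (\<lambda>j. x j * pd g j x)"
  unfolding Eps_expand pbracket_def
  by (intro sum.cong refl) (auto simp: ptensor_def eps_def)

lemma Eps_antisym: "Eps n u w = - Eps n w u"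
proof -
  have "Eps n w u = (\<Sum>i=1..n. \<Sum>j=1..n. eps j i * w j * u i)"
    unfolding Eps_expand by (subst sum.swap) simp
  also have "\<dots> = (\<Sum>i=1..n. \<Sum>j=1..n. - (eps i j * u i * w j))"
    by (intro sum.cong refl) (auto simp: eps_def)
  also have "\<dots> = - Eps n u w" unfolding Eps_expand by (simp add: sum_negf)
  finally show ?thesis by simp
qed

lemma Eps_self: "Eps n u u = 0"
  using Eps_antisym[of n u u] by simp

lemma Eps_cong:
  assumes "\<And>i. i \<in> {1..n} \<Longrightarrow> u i = u' i" "\<And>i. i \<in> {1..n} \<Longrightarrow> w i = w' i"
  shows "Eps n u w = Eps n u' w'"
  unfolding Eps_expand using assms by (intro sum.cong refl) auto

lemma Eps_lin_left: "Eps n (\<lambda>i. c * u i + d * u' i) w = c * Eps n u w + d * Eps n u' w"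
  unfolding Eps_expand sum_distrib_left sum.distrib[symmetric]
  by (intro sum.cong refl) (simp add: algebra_simps)

lemma Eps_lin_right: "Eps n w (\<lambda>i. c * u i + d * u' i) = c * Eps n w u + d * Eps n w u'"
  unfolding Eps_expand sum_distrib_left sum.distrib[symmetric]
  by (intro sum.cong refl) (simp add: algebra_simps)

definition rr :: "(nat \<Rightarrow> real) \<Rightarrow> nat \<Rightarrow> (nat \<Rightarrow> real) \<Rightarrow> nat \<Rightarrow> real" where
  "rr a p x i = (if 1 \<le> i \<and> i \<le> p then a i * x i else 0)"

lemma Sv_rr_gt:
  assumes "p \<le> n" "p < j"
  shows "Sv n (rr a p x) j = vv a p x"
proof -
  have "Sv n (rr a p x) j = (\<Sum>i=1..p. a i * x i)"
    unfolding Sv_def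
    by (rule sum.mono_neutral_cong_right) (use assms in \<open>auto simp: rr_def eps_def\<close>)
  then show ?thesis by (simp add: vv_def)
qed

lemma sum_rr:
  assumes "1 \<le> lo"
  shows "(\<Sum>j=lo..hi. rr a q x j) = (\<Sum>j=lo..min hi q. a j * x j)"
  by (rule sum.mono_neutral_cong_right) (use assms in \<open>auto simp: rr_def\<close>)

lemma vv_split:
  assumes "p \<le> q"
  shows "vv a q x = vv a p x + (\<Sum>j=Suc p..q. a j * x j)"
proof -
  have "{1..q} = {1..p} \<union> {Suc p..q}" using assms by auto
  then show ?thesis unfolding vv_def by (simp add: sum.union_disjoint)
qed

lemma Eps_rr:
  assumes "p \<le> q" "q \<le> n"
  shows "Eps n (rr a p x) (rr a q x) = vv a p x * (vv a q x - vv a p x)"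
proof -
  define d where "d i = (if p < i \<and> i \<le> q then a i * x i else 0)" for i
  have "rr a q x = (\<lambda>i. 1 * rr a p x i + 1 * d i)"
    by (rule ext) (use assms in \<open>auto simp: rr_def d_def\<close>)
  then have "Eps n (rr a p x) (rr a q x) = Eps n (rr a p x) (rr a p x) + Eps n (rr a p x) d"
    using Eps_lin_right[of n "rr a p x" 1 "rr a p x" 1 d] by simp
  also have "Eps n (rr a p x) d = (\<Sum>j=Suc p..q. vv a p x * (a j * x j))"
    unfolding Eps_def
    by (rule sum.mono_neutral_cong_right) (use assms in \<open>auto simp: d_def Sv_rr_gt\<close>)
  also have "\<dots> = vv a p x * (vv a q x - vv a p x)"
    using vv_split[OF assms(1), of a x] by (simp add: sum_distrib_left)
  finally show ?thesis by (simp add: Eps_self)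
qed

lemma Eps_altC:
  assumes "odd n"
  shows "Eps n (alt 1 n) w = 0"
  unfolding Eps_def using Sv_altC[OF assms] by simp

lemma Eps_altJ:
  assumes "2*k \<le> n"
  shows "Eps n (alt 1 (2*k)) w = (\<Sum>j=1..2*k. w j)"
  unfolding Eps_def
  by (rule sum.mono_neutral_cong_right) (use assms Sv_altJ[OF assms] in auto)

lemma Eps_altF:
  assumes "odd n" "1 \<le> l" "2*l \<le> n"
  shows "Eps n (alt (2*l) n) w = - (\<Sum>j=2*l..n. w j)"
proof -
  have "Eps n (alt (2*l) n) w = (\<Sum>j=2*l..n. - w j)"
    unfolding Eps_def
    by (rule sum.mono_neutral_cong_right) (use assms Sv_altF[OF assms] in auto)
  then show ?thesis by (simp add: sum_negf)
qed



lemma Eps_scale_left: "Eps n (\<lambda>i. c * u i) w = c * Eps n u w"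
  using Eps_lin_left[of n c u 0 u w] by simp

lemma torus_nz: "x \<in> torus n \<Longrightarrow> i \<in> {1..n} \<Longrightarrow> x i \<noteq> 0"
  unfolding torus_def by auto

lemma pbracket_antisym: "pbracket n f g x = - pbracket n g f x"
  unfolding pbracket_Eps by (rule Eps_antisym)

lemma pbracket_self: "pbracket n f f x = 0"
  unfolding pbracket_Eps by (rule Eps_self)

lemma br_C:
  assumes "x \<in> torus n" "odd n"
  shows "pbracket n (CC n) g x = 0"
proof -
  have "pbracket n (CC n) g x = Eps n (\<lambda>i. CC n x * alt 1 n i) (\<lambda>j. x j * pd g j x)"
    unfolding pbracket_Eps
    by (rule Eps_cong) (use Df_CC torus_nz[OF assms(1)] assms(2) in \<open>auto simp: mult.commute\<close>)
  also have "\<dots> = 0" unfolding Eps_scale_left Eps_altC[OF assms(2)] by simp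
  finally show ?thesis .
qed

lemma br_J:
  assumes "x \<in> torus n" "2*k \<le> n"
  shows "pbracket n (JJ k) g x = JJ k x * (\<Sum>j=1..2*k. x j * pd g j x)"
proof -
  have "pbracket n (JJ k) g x = Eps n (\<lambda>i. JJ k x * alt 1 (2*k) i) (\<lambda>j. x j * pd g j x)"
    unfolding pbracket_Eps
    by (rule Eps_cong) (use Df_JJ torus_nz[OF assms(1)] in \<open>auto simp: mult.commute\<close>)
  also have "\<dots> = JJ k x * (\<Sum>j=1..2*k. x j * pd g j x)" unfolding Eps_scale_left Eps_altJ[OF assms(2)] ..
  finally show ?thesis .
qed

lemma sumPP_even: "(\<Sum>j=1..2*k. PP j) = 0"
  unfolding sum_PP by (auto simp: PP_def)

lemma sumJ_J:
  assumes "x \<in> torus n" "2*k \<le> n" "2*l \<le> n"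
  shows "(\<Sum>j=1..2*k. x j * pd (JJ l) j x) = 0"
proof -
  have "(\<Sum>j=1..2*k. x j * pd (JJ l) j x) = (\<Sum>j=1..2*k. JJ l x * alt 1 (2*l) j)"
    by (rule sum.cong) (use Df_JJ torus_nz[OF assms(1)] assms in \<open>auto simp: mult.commute\<close>)
  also have "\<dots> = JJ l x * (\<Sum>j=1..2*k. alt 1 (2*l) j)"
    by (simp add: sum_distrib_left)
  also have "(\<Sum>j=1..2*k. alt 1 (2*l) j) = (\<Sum>j=1..2*min k l. PP j)"
    by (rule sum.mono_neutral_cong_right) (auto simp: alt_def PP_def)
  finally show ?thesis unfolding sumPP_even by simp
qed

lemma sumJ_C:
  assumes "x \<in> torus n" "2*k \<le> n" "odd n"
  shows "(\<Sum>j=1..2*k. x j * pd (CC n) j x) = 0"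
proof -
  have "(\<Sum>j=1..2*k. x j * pd (CC n) j x) = (\<Sum>j=1..2*k. CC n x * PP j)"
    by (rule sum.cong) (use Df_CC torus_nz[OF assms(1)] assms in \<open>auto simp: mult.commute alt_def PP_def\<close>)
  then show ?thesis unfolding sum_distrib_left[symmetric] sumPP_even by simp
qed

lemma sumJ_H:
  assumes "2*k \<le> n" "\<And>j. 1 \<le> j \<Longrightarrow> j \<le> 2*k \<Longrightarrow> a j = 0"
  shows "(\<Sum>j=1..2*k. x j * pd (HH a n) j x) = 0"
  using assms by (intro sum.neutral) (auto simp: Df_HH)

lemma sumJ_F:
  assumes "x \<in> torus n" "odd n" "2*k \<le> n" "\<And>j. 1 \<le> j \<Longrightarrow> j \<le> 2*k \<Longrightarrow> a j = 0" "k < l"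
  shows "(\<Sum>j=1..2*k. x j * pd (FF a n l) j x) = 0"
  using assms by (intro sum.neutral) (auto simp: Df_FF torus_nz alt_def)

lemma DF_vec:
  assumes "x \<in> torus n" "odd n" "1 \<le> l"
  shows "\<And>i. i \<in> {1..n} \<Longrightarrow> x i * pd (FF a n l) i x = MM n l x * rr a (2*l-1) x i + FF a n l x * alt (2*l) n i"
  using Df_FF torus_nz[OF assms(1)] assms by (auto simp: rr_def mult.commute)

lemma br_HF:
  assumes "x \<in> torus n" "odd n" "1 \<le> l" "2*l \<le> n"
  shows "pbracket n (HH a n) (FF a n l) x = 0"
proof -
  let ?q = "2*l-1"
  have "pbracket n (HH a n) (FF a n l) x
      = Eps n (rr a n x) (\<lambda>i. MM n l x * rr a ?q x i + FF a n l x * alt (2*l) n i)"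
    unfolding pbracket_Eps
    by (rule Eps_cong) (use DF_vec[OF assms(1-3)] in \<open>auto simp: Df_HH rr_def\<close>)
  also have "\<dots> = MM n l x * Eps n (rr a n x) (rr a ?q x) + FF a n l x * Eps n (rr a n x) (alt (2*l) n)"
    by (rule Eps_lin_right)
  also have "Eps n (rr a n x) (rr a ?q x) = - (vv a ?q x * (vv a n x - vv a ?q x))"
    using Eps_antisym[of n "rr a n x"] Eps_rr[of ?q n n a x] assms by simp
  also have "Eps n (rr a n x) (alt (2*l) n) = (\<Sum>j=2*l..n. rr a n x j)"
    using Eps_antisym[of n "rr a n x"] Eps_altF[OF assms(2,3,4)] by simp
  also have "\<dots> = vv a n x - vv a ?q x"
  proof -
    have "(\<Sum>j=2*l..n. rr a n x j) = (\<Sum>j=Suc ?q..n. a j * x j)"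
      using sum_rr[where lo="2*l" and hi=n and a=a and q=n and x=x] assms by simp
    then show ?thesis using vv_split[of ?q n a x] assms by simp
  qed
  finally show ?thesis unfolding FF_MM by (simp add: algebra_simps)
qed

lemma br_FF:
  assumes "x \<in> torus n" "odd n" "1 \<le> k" "k < l" "2*l \<le> n"
  shows "pbracket n (FF a n k) (FF a n l) x = 0"
proof -
  let ?p = "2*k-1" and ?q = "2*l-1"
  have "pbracket n (FF a n k) (FF a n l) x
      = Eps n (\<lambda>i. MM n k x * rr a ?p x i + FF a n k x * alt (2*k) n i)
              (\<lambda>i. MM n l x * rr a ?q x i + FF a n l x * alt (2*l) n i)"
    unfolding pbracket_Eps
    by (rule Eps_cong) (use DF_vec[OF assms(1,2)] assms in auto)
  also have "\<dots> = MM n k x * (MM n l x * Eps n (rr a ?p x) (rr a ?q x) + FF a n l x * Eps n (rr a ?p x) (alt (2*l) n))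
     + FF a n k x * (MM n l x * Eps n (alt (2*k) n) (rr a ?q x) + FF a n l x * Eps n (alt (2*k) n) (alt (2*l) n))"
    unfolding Eps_lin_left Eps_lin_right ..
  also have "Eps n (rr a ?p x) (rr a ?q x) = vv a ?p x * (vv a ?q x - vv a ?p x)"
    using Eps_rr[of ?p ?q n a x] assms by simp
  also have "Eps n (rr a ?p x) (alt (2*l) n) = 0"
  proof -
    have "Eps n (rr a ?p x) (alt (2*l) n) = (\<Sum>j=2*l..n. rr a ?p x j)"
      using Eps_antisym[of n "rr a ?p x"] Eps_altF[OF assms(2) _ assms(5)] assms by simp
    also have "\<dots> = 0" using assms by (intro sum.neutral) (auto simp: rr_def)
    finally show ?thesis .
  qed
  also have "Eps n (alt (2*k) n) (rr a ?q x) = - (vv a ?q x - vv a ?p x)"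
  proof -
    have "Eps n (alt (2*k) n) (rr a ?q x) = - (\<Sum>j=2*k..n. rr a ?q x j)"
      using Eps_altF[OF assms(2,3)] assms by simp
    also have "(\<Sum>j=2*k..n. rr a ?q x j) = (\<Sum>j=Suc ?p..?q. a j * x j)"
      using sum_rr[where lo="2*k" and hi=n and a=a and q="?q" and x=x] assms by (simp add: min_def)
    also have "\<dots> = vv a ?q x - vv a ?p x" using vv_split[of ?p ?q a x] assms by simp
    finally show ?thesis .
  qed
  also have "Eps n (alt (2*k) n) (alt (2*l) n) = 0"
  proof -
    have "Eps n (alt (2*k) n) (alt (2*l) n) = - (\<Sum>j=2*k..n. alt (2*l) n j)"
      using Eps_altF[OF assms(2,3)] assms by simp
    also have "(\<Sum>j=2*k..n. alt (2*l) n j) = (\<Sum>j=2*l..n. PP j)"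
      by (rule sum.mono_neutral_cong_right) (use assms in \<open>auto simp: alt_def PP_def\<close>)
    also have "\<dots> = 0" unfolding sum_PP using assms by (auto; presburger)
    finally show ?thesis by simp
  qed
  finally show ?thesis unfolding FF_MM by (simp add: algebra_simps)
qed



definition lin :: "nat \<Rightarrow> (nat \<Rightarrow> real) \<Rightarrow> (nat \<Rightarrow> real) \<Rightarrow> real" where
  "lin n L x = (\<Sum>i=1..n. L i * x i)"

lemma lin_affine: "lin n M (\<lambda>i. u i + t * z i) = lin n M u + t * lin n M z"
  unfolding lin_def by (simp add: algebra_simps sum.distrib sum_distrib_left)

lemma lin_cont: "continuous_on UNIV (lin n L)"
  unfolding lin_def
  by (intro continuous_on_sum continuous_on_mult_left continuous_on_product_coordinates)

lemma open_avoid: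
  assumes "finite S"
  shows "openin (top_of_set (Rn n)) {x\<in>Rn n. \<forall>L\<in>S. lin n L x \<noteq> 0}"
proof -
  have "{x\<in>Rn n. \<forall>L\<in>S. lin n L x \<noteq> 0} = Rn n \<inter> (\<Inter>L\<in>S. {x. lin n L x \<noteq> 0})" by auto
  moreover have "open (\<Inter>L\<in>S. {x. lin n L x \<noteq> 0})"
    using assms by (intro open_INT ballI open_Collect_neq lin_cont continuous_on_const) auto
  ultimately show ?thesis by auto
qed

lemma exists_avoid:
  assumes "finite S" "\<forall>L\<in>S. \<exists>i\<in>{1..n}. L i \<noteq> 0"
  shows "\<exists>u\<in>Rn n. \<forall>L\<in>S. lin n L u \<noteq> 0"
  using assms
proof (induction S rule: finite_induct)
  case empty
  have "(\<lambda>i. 0) \<in> Rn n" by (simp add: Rn_def)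
  then show ?case by blast
next
  case (insert L S)
  then obtain u where u: "u \<in> Rn n" "\<forall>M\<in>S. lin n M u \<noteq> 0" by auto
  show ?case
  proof (cases "lin n L u = 0")
    case False then show ?thesis using u by auto
  next
    case True
    define z where "z i = (if i \<in> {1..n} then L i else 0)" for i
    have zR: "z \<in> Rn n" by (auto simp: Rn_def z_def)
    obtain i0 where i0: "i0 \<in> {1..n}" "L i0 \<noteq> 0" using insert.prems by auto
    have "lin n L z = (\<Sum>i=1..n. (L i)^2)" unfolding lin_def z_def by (simp add: power2_eq_square)
    also have "\<dots> > 0"
      by (rule sum_pos2[of _ i0]) (use i0 in auto)
    finally have Lz: "lin n L z \<noteq> 0" by simp
    define B where "B = insert 0 ((\<lambda>M. - lin n M u / lin n M z) ` S)"
    have "finite B" using insert.hyps by (simp add: B_def)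
    then obtain t :: real where t: "t \<notin> B" using ex_new_if_finite[OF infinite_UNIV_char_0] by blast
    define w where "w i = u i + t * z i" for i
    have "w \<in> Rn n" using u(1) zR by (auto simp: Rn_def w_def)
    moreover have "lin n L w \<noteq> 0" using True Lz t unfolding w_def lin_affine by (auto simp: B_def)
    moreover have "lin n M w \<noteq> 0" if "M \<in> S" for M
    proof
      assume h: "lin n M w = 0"
      then have e: "lin n M u + t * lin n M z = 0" unfolding w_def lin_affine .
      then have "lin n M z \<noteq> 0" using u(2) that by auto
      then have "t = - lin n M u / lin n M z" using e by (simp add: field_simps)
      then show False using t that by (auto simp: B_def)
    qed
    ultimately show ?thesis by blast
  qed
qed

lemma dense_avoid:
  assumes "finite S" "\<forall>L\<in>S. \<exists>i\<in>{1..n}. L i \<noteq> 0"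
  shows "Rn n \<subseteq> closure {x\<in>Rn n. \<forall>L\<in>S. lin n L x \<noteq> 0}"
proof
  fix y assume y: "y \<in> Rn n"
  obtain u where u: "u \<in> Rn n" "\<forall>L\<in>S. lin n L u \<noteq> 0" using exists_avoid[OF assms] by blast
  define \<phi> where "\<phi> t = (\<lambda>i. y i + t * u i)" for t :: real
  define B where "B = (\<lambda>M. - lin n M y / lin n M u) ` S"
  have fB: "finite B" using assms(1) by (simp add: B_def)
  let ?V = "{x\<in>Rn n. \<forall>L\<in>S. lin n L x \<noteq> 0}"
  have sub: "\<phi> ` (- B) \<subseteq> closure ?V"
  proof -
    have "\<phi> ` (- B) \<subseteq> ?V"
    proof safe
      fix t assume t: "t \<notin> B"
      show "\<phi> t \<in> Rn n" using y u(1) by (auto simp: Rn_def \<phi>_def)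
      fix L assume L: "L \<in> S" "lin n L (\<phi> t) = 0"
      have e: "lin n L y + t * lin n L u = 0" using L(2) unfolding \<phi>_def lin_affine by simp
      have "t = - lin n L y / lin n L u" using e u(2) L(1) by (simp add: field_simps)
      then show False using t L(1) by (auto simp: B_def)
    qed
    then show ?thesis using closure_subset by blast
  qed
  have cont: "continuous_on (closure (- B)) \<phi>"
    unfolding \<phi>_def
    by (intro continuous_on_coordinatewise_then_product continuous_intros)
  have "\<phi> ` closure (- B) \<subseteq> closure ?V"
    by (rule image_closure_subset[OF cont closed_closure sub])
  moreover have "closure (- B) = UNIV"
    unfolding closure_complement using empty_interior_finite[OF fB] by simp
  moreover have "\<phi> 0 = y" by (simp add: \<phi>_def)
  ultimately show "y \<in> closure ?V" by auto
qed



lemma fam_length: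
  assumes "lam < (n-1) div 2"
  shows "length (fam a n lam) = (n-1) div 2 + 1"
  using assms by (simp add: fam_def; arith)

lemma fam_nth:
  assumes "lam < (n-1) div 2" "p \<le> (n-1) div 2"
  shows "fam a n lam ! p = (if p < lam then JJ (p+1) else if p = lam then HH a n
     else if p < (n-1) div 2 then FF a n (p+1) else CC n)"
proof -
  let ?m = "(n-1) div 2"
  let ?xs = "map JJ [1..<lam + 1]" and ?ys = "map (FF a n) [lam + 2..<?m + 1]"
  have f: "fam a n lam = ?xs @ (HH a n # (?ys @ [CC n]))" by (simp add: fam_def)
  have lx: "length ?xs = lam" by simp
  have ly: "length ?ys = ?m - lam - 1" by (simp; arith)
  show ?thesis
  proof (cases "p < lam")
    case True
    have "?xs ! p = JJ (1 + p)" using True by (simp del: upt_Suc add: nth_map)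
    moreover have "fam a n lam ! p = ?xs ! p" unfolding f using True lx by (simp only: nth_append) simp
    ultimately show ?thesis using True by simp
  next
    case False
    then have "fam a n lam ! p = (HH a n # (?ys @ [CC n])) ! (p - lam)"
      unfolding f using lx by (simp del: upt_Suc add: nth_append)
    also have "\<dots> = (if p = lam then HH a n else (?ys @ [CC n]) ! (p - lam - 1))"
      using False by (cases "p - lam") (auto simp del: upt_Suc)
    also have "\<dots> = (if p = lam then HH a n else if p < ?m then FF a n (p+1) else CC n)"
      using False assms ly by (auto simp del: upt_Suc simp: nth_append)
    finally show ?thesis using False by simp
  qed
qed

lemma fam_set:
  assumes "f \<in> set (fam a n lam)"
  shows "(\<exists>k\<in>{1..lam}. f = JJ k) \<or> f = HH a n \<or> (\<exists>k\<in>{lam+2..(n-1) div 2}. f = FF a n k) \<or> f = CC n"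
  using assms by (auto simp: fam_def)

lemma inv_pair:
  assumes x: "x \<in> torus n" and n: "odd n" and lm: "lam < (n-1) div 2"
    and az: "\<And>j. 1 \<le> j \<Longrightarrow> j \<le> 2*lam \<Longrightarrow> a j = 0"
    and f: "f \<in> set (fam a n lam)" and g: "g \<in> set (fam a n lam)"
  shows "pbracket n f g x = 0"
proof -
  have n2: "2 * ((n-1) div 2) + 1 = n" using n by presburger
  have Jg: "pbracket n (JJ k) h x = 0" if k: "k \<in> {1..lam}" and h: "h \<in> set (fam a n lam)" for k h
  proof -
    have kn: "2*k \<le> n" using k lm n2 by auto
    have az': "\<And>j. 1 \<le> j \<Longrightarrow> j \<le> 2*k \<Longrightarrow> a j = 0" using az k by auto
    have "(\<Sum>j=1..2*k. x j * pd h j x) = 0"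
      using fam_set[OF h]
    proof (elim disjE bexE)
      fix l assume "l \<in> {1..lam}" "h = JJ l"
      then show ?thesis using sumJ_J[OF x kn, of l] lm n2 by auto
    next
      assume "h = HH a n" then show ?thesis using sumJ_H[OF kn az'] by simp
    next
      fix l assume "l \<in> {lam+2..(n-1) div 2}" "h = FF a n l"
      then show ?thesis using sumJ_F[where l=l, OF x n kn az'] k by auto
    next
      assume "h = CC n" then show ?thesis using sumJ_C[OF x kn n] by simp
    qed
    then show ?thesis using br_J[OF x kn] by simp
  qed
  have Cg: "pbracket n (CC n) h x = 0" for h using br_C[OF x n] .
  have HF: "pbracket n (HH a n) (FF a n l) x = 0" if "l \<in> {lam+2..(n-1) div 2}" for l
    using br_HF[OF x n, of l a] that n2 by auto
  have FF: "pbracket n (FF a n k) (FF a n l) x = 0" if "k \<in> {lam+2..(n-1) div 2}" "l \<in> {lam+2..(n-1) div 2}" for k l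
  proof (cases k l rule: linorder_cases)
    case less then show ?thesis using br_FF[OF x n, of k l a] that n2 by auto
  next
    case equal then show ?thesis by (simp add: pbracket_self)
  next
    case greater then show ?thesis
      using br_FF[OF x n, of l k a] that n2 pbracket_antisym[of n "FF a n k"] by auto
  qed
  show ?thesis
    using fam_set[OF f]
  proof (elim disjE bexE)
    fix k assume "k \<in> {1..lam}" "f = JJ k" then show ?thesis using Jg g by simp
  next
    assume "f = CC n" then show ?thesis using Cg by simp
  next
    assume fH: "f = HH a n"
    show ?thesis using fam_set[OF g]
    proof (elim disjE bexE)
      fix k assume "k \<in> {1..lam}" "g = JJ k" then show ?thesis
        using Jg[of k f] f pbracket_antisym[of n f g] by simp
    next
      assume "g = HH a n" then show ?thesis using fH by (simp add: pbracket_self)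
    next
      fix l assume "l \<in> {lam+2..(n-1) div 2}" "g = FF a n l" then show ?thesis using HF fH by simp
    next
      assume "g = CC n" then show ?thesis using Cg[of f] pbracket_antisym[of n f g] by simp
    qed
  next
    fix k assume k: "k \<in> {lam+2..(n-1) div 2}" and fF: "f = FF a n k"
    show ?thesis using fam_set[OF g]
    proof (elim disjE bexE)
      fix l assume "l \<in> {1..lam}" "g = JJ l" then show ?thesis
        using Jg[of l f] f pbracket_antisym[of n f g] by simp
    next
      assume "g = HH a n" then show ?thesis using HF[OF k] fF pbracket_antisym[of n f g] by simp
    next
      fix l assume "l \<in> {lam+2..(n-1) div 2}" "g = FF a n l" then show ?thesis using FF k fF by simp
    next
      assume "g = CC n" then show ?thesis using Cg[of f] pbracket_antisym[of n f g] by simp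
    qed
  qed
qed



lemma JJ_nz: "x \<in> torus n \<Longrightarrow> 2*k \<le> n \<Longrightarrow> JJ k x \<noteq> 0"
proof -
  assume x: "x \<in> torus n" and k: "2*k \<le> n"
  have "\<forall>p\<in>{1..k}. x (2*p-1) \<noteq> 0 \<and> x (2*p) \<noteq> 0"
  proof
    fix p assume p: "p \<in> {1..k}"
    have "2*p-1 \<in> {1..n}" "2*p \<in> {1..n}" using p k by auto
    then show "x (2*p-1) \<noteq> 0 \<and> x (2*p) \<noteq> 0" using torus_nz[OF x] by blast
  qed
  then show ?thesis unfolding JJ_def by (simp add: prod_zero_iff)
qed

lemma MM_nz: "x \<in> torus n \<Longrightarrow> odd n \<Longrightarrow> 1 \<le> k \<Longrightarrow> MM n k x \<noteq> 0"
proof -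
  assume x: "x \<in> torus n" and n: "odd n" and k: "1 \<le> k"
  have n2: "2 * ((n-1) div 2) + 1 = n" using n by presburger
  have "\<forall>p\<in>{k..(n-1) div 2}. x (2*p+1) \<noteq> 0 \<and> x (2*p) \<noteq> 0"
  proof
    fix p assume p: "p \<in> {k..(n-1) div 2}"
    have "2*p+1 \<in> {1..n}" "2*p \<in> {1..n}" using p k n2 by auto
    then show "x (2*p+1) \<noteq> 0 \<and> x (2*p) \<noteq> 0" using torus_nz[OF x] by blast
  qed
  then show ?thesis unfolding MM_def by (simp add: prod_zero_iff)
qed

lemma CC_nz: "x \<in> torus n \<Longrightarrow> odd n \<Longrightarrow> CC n x \<noteq> 0"
proof -
  assume x: "x \<in> torus n" and n: "odd n"
  have n2: "2 * ((n-1) div 2) + 1 = n" using n by presburger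
  have 1: "\<forall>p\<in>{0..(n-1) div 2}. x (2*p+1) \<noteq> 0"
  proof
    fix p assume p: "p \<in> {0..(n-1) div 2}"
    have "2*p+1 \<in> {1..n}" using p n2 by auto
    then show "x (2*p+1) \<noteq> 0" using torus_nz[OF x] by blast
  qed
  have 2: "\<forall>p\<in>{1..(n-1) div 2}. x (2*p) \<noteq> 0"
  proof
    fix p assume p: "p \<in> {1..(n-1) div 2}"
    have "2*p \<in> {1..n}" using p n2 by auto
    then show "x (2*p) \<noteq> 0" using torus_nz[OF x] by blast
  qed
  show ?thesis unfolding CC_def using 1 2 by (simp add: prod_zero_iff)
qed

lemma indep:
  fixes n :: nat and a :: "nat \<Rightarrow> real" and lam L :: nat
  assumes x: "x \<in> torus n" and n: "odd n" and lm: "lam < (n-1) div 2"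
    and aL: "a (L+1) \<noteq> 0" and Ln: "L + 1 \<le> n"
    and lamL: "2*lam \<le> L" "L \<le> 2*lam + 1"
    and hv: "\<And>p. lam < p \<Longrightarrow> p < (n-1) div 2 \<Longrightarrow> vv a (2*(p+1)-1) x \<noteq> 0"
    and hw: "\<And>q. lam+1 \<le> q \<Longrightarrow> q \<le> (n-1) div 2 \<Longrightarrow> (a (2*q) = 0 \<and> a (2*q+1) = 0) \<or> a (2*q) * x (2*q) + a (2*q+1) * x (2*q+1) \<noteq> 0"
  shows "diffs_indep n (fam a n lam) x"
proof -
  define m where "m = (n-1) div 2"
  have n2: "2*m+1 = n" using n m_def by presburger
  have lm': "lam < m" using lm m_def by simp
  have len: "length (fam a n lam) = m+1" using fam_length[OF lm] m_def by simp
  define Dv where "Dv p i = (if p < lam then JJ (p+1) x * alt 1 (2*(p+1)) i else if p = lam then rr a n x i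
     else if p < m then MM n (p+1) x * rr a (2*(p+1)-1) x i + FF a n (p+1) x * alt (2*(p+1)) n i
     else CC n x * alt 1 n i)" for p i
  have DvE: "x i * pd (fam a n lam ! p) i x = Dv p i" if p: "p \<le> m" and i: "i \<in> {1..n}" for p i
  proof -
    have xi: "x i \<noteq> 0" using torus_nz[OF x i] .
    have f: "fam a n lam ! p = (if p < lam then JJ (p+1) else if p = lam then HH a n
     else if p < m then FF a n (p+1) else CC n)" using fam_nth[OF lm, of p a] p m_def by simp
    show ?thesis
      unfolding f Dv_def using Df_JJ[where x=x and i=i, OF xi] Df_HH Df_FF[where x=x and i=i, OF xi n] Df_CC[where x=x and i=i, OF xi n] i
      by (auto simp: rr_def mult.commute)
  qed
  show ?thesis unfolding diffs_indep_def len
  proof (rule allI, rule impI)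
    fix c assume H: "\<forall>i\<in>{1..n}. (\<Sum>k<m+1. c k * pd (fam a n lam ! k) i x) = 0"
    have R: "(\<Sum>p<m+1. c p * Dv p i) = 0" if i: "i \<in> {1..n}" for i
    proof -
      have "(\<Sum>p<m+1. c p * Dv p i) = x i * (\<Sum>k<m+1. c k * pd (fam a n lam ! k) i x)"
        unfolding sum_distrib_left
      proof (rule sum.cong)
        fix p assume "p \<in> {..<m+1}"
        then show "c p * Dv p i = x i * (c p * pd (fam a n lam ! p) i x)"
          using DvE[of p i] i by simp
      qed simp
      then show ?thesis using H i by simp
    qed
    define g where "g p = c p * MM n (p+1) x" for p
    define Bq where "Bq j = (\<Sum>p<m+1. if p = lam then c lam else if lam < p \<and> p < m \<and> j \<le> p then g p else 0)" for j
    define Tq where "Tq j = (\<Sum>p<m+1. if p = m then c m * CC n x else if lam < p \<and> p < m \<and> p < j then g p * vv a (2*(p+1)-1) x else 0)" for j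
    have odd_eq: "(\<Sum>p<m+1. c p * Dv p (2*j+1)) = a (2*j+1) * x (2*j+1) * Bq j + Tq j" if j: "lam+1 \<le> j" "j \<le> m" for j
      unfolding Bq_def Tq_def sum_distrib_left sum.distrib[symmetric]
      by (rule sum.cong) (use j n2 lm' in \<open>auto simp: Dv_def alt_def rr_def FF_MM g_def algebra_simps\<close>)
    have even_eq: "(\<Sum>p<m+1. c p * Dv p (2*j)) = a (2*j) * x (2*j) * Bq j - Tq j" if j: "lam+1 \<le> j" "j \<le> m" for j
      unfolding Bq_def Tq_def sum_distrib_left sum_subtractf[symmetric]
      by (rule sum.cong) (use j n2 lm' in \<open>auto simp: Dv_def alt_def rr_def FF_MM g_def algebra_simps\<close>)
    have T0: "Tq j = 0" if j: "lam+1 \<le> j" "j \<le> m" for j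
    proof -
      have i1: "2*j+1 \<in> {1..n}" "2*j \<in> {1..n}" using j n2 by auto
      have e1: "a (2*j+1) * x (2*j+1) * Bq j + Tq j = 0" using R[OF i1(1)] odd_eq[OF j] by simp
      have e2: "a (2*j) * x (2*j) * Bq j - Tq j = 0" using R[OF i1(2)] even_eq[OF j] by simp
      show ?thesis
      proof (cases "a (2*j) = 0 \<and> a (2*j+1) = 0")
        case True then show ?thesis using e1 by simp
      next
        case False
        then have W: "a (2*j) * x (2*j) + a (2*j+1) * x (2*j+1) \<noteq> 0" using hw[of j] j m_def by auto
        have "(a (2*j) * x (2*j) + a (2*j+1) * x (2*j+1)) * Bq j = 0" using e1 e2 by (simp add: algebra_simps)
        then have "Bq j = 0" using W by simp
        then show ?thesis using e1 by simp
      qed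
    qed
    have cm: "c m * CC n x = 0"
    proof -
      have "Tq (lam+1) = (\<Sum>p<m+1. if p = m then c m * CC n x else 0)"
        unfolding Tq_def by (rule sum.cong) auto
      also have "\<dots> = c m * CC n x" by simp
      finally show ?thesis using T0[of "lam+1"] lm' by simp
    qed
    have gz: "g p = 0" if "lam < p" "p < m" for p
      using that
    proof (induction p rule: less_induct)
      case (less p)
      have "Tq (p+1) = (\<Sum>q<m+1. if q = p then g p * vv a (2*(p+1)-1) x else 0)"
        unfolding Tq_def by (rule sum.cong) (use less cm in auto)
      also have "\<dots> = g p * vv a (2*(p+1)-1) x" using less by simp
      finally have "g p * vv a (2*(p+1)-1) x = 0" using T0[of "p+1"] less by simp
      then show ?case using hv[of p] less m_def by simp
    qed
    have cP: "c p = 0" if "lam < p" "p < m" for p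
      using gz[OF that] MM_nz[OF x n, of "p+1"] by (simp add: g_def)
    have cM: "c m = 0" using cm CC_nz[OF x n] by simp
    have Rred: "(\<Sum>p<m+1. c p * Dv p i) = (\<Sum>p<m+1. if p < lam then c p * JJ (p+1) x * alt 1 (2*(p+1)) i
        else if p = lam then c lam * rr a n x i else 0)" for i
    proof (rule sum.cong)
      fix p assume p: "p \<in> {..<m+1}"
      show "c p * Dv p i = (if p < lam then c p * JJ (p+1) x * alt 1 (2*(p+1)) i
        else if p = lam then c lam * rr a n x i else 0)"
      proof (cases "lam < p \<and> p < m")
        case True then show ?thesis using cP[of p] by (simp add: Dv_def)
      next
        case False
        then have "p \<le> lam \<or> p = m" using p by auto
        then show ?thesis using cM lm' by (auto simp: Dv_def)
      qed
    qed simp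
    have clam: "c lam = 0"
    proof -
      have i: "L+1 \<in> {1..n}" using Ln by auto
      have "(\<Sum>p<m+1. if p < lam then c p * JJ (p+1) x * alt 1 (2*(p+1)) (L+1) else if p = lam then c lam * rr a n x (L+1) else 0)
          = (\<Sum>p<m+1. if p = lam then c lam * (a (L+1) * x (L+1)) else 0)"
        by (rule sum.cong) (use lamL Ln in \<open>auto simp: alt_def rr_def\<close>)
      also have "\<dots> = c lam * (a (L+1) * x (L+1))" using lm' by simp
      finally have "c lam * (a (L+1) * x (L+1)) = 0" using R[OF i] Rred[of "L+1"] by simp
      moreover have "x (L+1) \<noteq> 0" using torus_nz[OF x i] .
      ultimately show ?thesis using aL by simp
    qed
    have cJ: "c p0 = 0" if p0: "p0 < lam" for p0
    proof -
      have i: "2*p0+2 \<in> {1..n}" "2*p0+3 \<in> {1..n}" using p0 lm' n2 by auto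
      have "(\<Sum>p<m+1. c p * Dv p (2*p0+2)) + (\<Sum>p<m+1. c p * Dv p (2*p0+3))
          = (\<Sum>p<m+1. if p = p0 then - (c p0 * JJ (p0+1) x) else 0)"
        unfolding Rred sum.distrib[symmetric] by (rule sum.cong) (use p0 clam in \<open>auto simp: alt_def\<close>)
      also have "\<dots> = - (c p0 * JJ (p0+1) x)" using p0 lm' by simp
      finally have "c p0 * JJ (p0+1) x = 0" using R[OF i(1)] R[OF i(2)] by simp
      then show ?thesis using JJ_nz[OF x, of "p0+1"] p0 lm' n2 by auto
    qed
    show "\<forall>k<m+1. c k = 0"
    proof (intro allI impI)
      fix k assume "k < m+1"
      then consider "k < lam" | "k = lam" | "lam < k \<and> k < m" | "k = m" by linarith
      then show "c k = 0" using cJ clam cP cM by cases auto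
    qed
  qed
qed



theorem theorem2p4:
  fixes n :: nat and a :: "nat \<Rightarrow> real"
  assumes "odd n"
    and "\<exists>i\<in>{1..n}. a i \<noteq> 0"
    and "(LEAST l. a (l + 1) \<noteq> 0) + 2 \<le> n"
  shows "length (fam a n ((LEAST l. a (l + 1) \<noteq> 0) div 2)) = (n + 1) div 2
    \<and> (\<forall>p < length (fam a n ((LEAST l. a (l + 1) \<noteq> 0) div 2)).
         \<forall>q < length (fam a n ((LEAST l. a (l + 1) \<noteq> 0) div 2)).
           \<forall>x \<in> torus n. pbracket n (fam a n ((LEAST l. a (l + 1) \<noteq> 0) div 2) ! p)
                                    (fam a n ((LEAST l. a (l + 1) \<noteq> 0) div 2) ! q) x = 0)
    \<and> (\<exists>V. openin (top_of_set (Rn n)) V \<and> Rn n \<subseteq> closure V \<and> V \<subseteq> torus n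
          \<and> (\<forall>x\<in>V. diffs_indep n (fam a n ((LEAST l. a (l + 1) \<noteq> 0) div 2)) x))"
proof -
  define L where "L = (LEAST l. a (l + 1) \<noteq> 0)"
  define lam where "lam = L div 2"
  define m where "m = (n-1) div 2"
  note n = assms(1)
  have n2: "2*m+1 = n" using n m_def by presburger
  obtain i0 where i0: "i0 \<in> {1..n}" "a i0 \<noteq> 0" using assms(2) by blast
  have aL: "a (L+1) \<noteq> 0"
    unfolding L_def by (rule LeastI[of "\<lambda>l. a (l+1) \<noteq> 0" "i0-1"]) (use i0 in simp)
  have az: "a j = 0" if "1 \<le> j" "j \<le> L" for j
  proof -
    have "\<not> a (j - 1 + 1) \<noteq> 0" unfolding L_def
      by (rule not_less_Least) (use that L_def in auto)
    then show ?thesis using that by simp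
  qed
  have Ln: "L + 2 \<le> n" using assms(3) L_def by simp
  have lamL: "2*lam \<le> L" "L \<le> 2*lam+1" unfolding lam_def by auto
  have lm: "lam < m" using lamL Ln n2 by linarith
  have lm2: "lam < (n-1) div 2" using lm m_def by simp
  have len: "length (fam a n lam) = m + 1" using fam_length[OF lm2] m_def by simp
  have P1: "length (fam a n lam) = (n+1) div 2" using len n2 by auto
  have P2: "\<forall>p < length (fam a n lam). \<forall>q < length (fam a n lam). \<forall>x \<in> torus n.
      pbracket n (fam a n lam ! p) (fam a n lam ! q) x = 0"
  proof (intro allI impI ballI)
    fix p q x assume p: "p < length (fam a n lam)" and q: "q < length (fam a n lam)" and x: "x \<in> torus n"
    show "pbracket n (fam a n lam ! p) (fam a n lam ! q) x = 0"
      by (rule inv_pair[OF x n lm2 _ nth_mem[OF p] nth_mem[OF q]]) (use az lamL in auto)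
  qed
  define U where "U = (\<lambda>i. \<lambda>j. if j = i then 1 else 0 :: real) ` {1..n}"
  define Vf where "Vf = (\<lambda>p. \<lambda>j. if 1 \<le> j \<and> j \<le> 2*(p+1)-1 then a j else 0) ` {lam<..<m}"
  define Wf where "Wf = (\<lambda>q. \<lambda>j. if j = 2*q \<or> j = 2*q+1 then a j else 0) ` {lam+1..m}"
  define S where "S = {Lf \<in> U \<union> Vf \<union> Wf. \<exists>i\<in>{1..n}. Lf i \<noteq> 0}"
  define V where "V = {x\<in>Rn n. \<forall>Lf\<in>S. lin n Lf x \<noteq> 0}"
  have fS: "finite S" unfolding S_def U_def Vf_def Wf_def by auto
  have Snz: "\<forall>Lf\<in>S. \<exists>i\<in>{1..n}. Lf i \<noteq> 0" unfolding S_def by auto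
  have op: "openin (top_of_set (Rn n)) V" unfolding V_def by (rule open_avoid[OF fS])
  have dn: "Rn n \<subseteq> closure V" unfolding V_def by (rule dense_avoid[OF fS Snz])
  have VT: "V \<subseteq> torus n"
  proof
    fix x assume x: "x \<in> V"
    show "x \<in> torus n" unfolding torus_def
    proof (intro CollectI conjI ballI)
      show "x \<in> Rn n" using x V_def by auto
      fix i assume i: "i \<in> {1..n}"
      let ?u = "\<lambda>j. if j = i then 1 else 0 :: real"
      have "?u \<in> S" unfolding S_def U_def using i by auto
      then have "lin n ?u x \<noteq> 0" using x V_def by auto
      moreover have "lin n ?u x = x i" unfolding lin_def
        by (subst sum.cong[OF refl, of _ _ "\<lambda>j. if j = i then x j else 0"]) (use i in auto)
      ultimately show "x i \<noteq> 0" by simp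
    qed
  qed
  have P3: "\<forall>x\<in>V. diffs_indep n (fam a n lam) x"
  proof
    fix x assume xV: "x \<in> V"
    have x: "x \<in> torus n" using xV VT by auto
    have linS: "lin n Lf x \<noteq> 0" if "Lf \<in> S" for Lf using xV that V_def by auto
    have Ln1: "L + 1 \<le> n" using Ln by simp
    have hv: "vv a (2*(p+1)-1) x \<noteq> 0" if p: "lam < p" "p < (n-1) div 2" for p
    proof -
      let ?f = "\<lambda>j. if 1 \<le> j \<and> j \<le> 2*(p+1)-1 then a j else 0"
      have "?f \<in> S" unfolding S_def Vf_def using p m_def aL lamL Ln
        by (auto intro!: bexI[of _ "L+1"])
      then have "lin n ?f x \<noteq> 0" by (rule linS)
      moreover have "lin n ?f x = vv a (2*(p+1)-1) x"
        unfolding lin_def vv_def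
        by (rule sum.mono_neutral_cong_right) (use p n2 m_def in auto)
      ultimately show "vv a (2*(p+1)-1) x \<noteq> 0" by simp
    qed
    have hw: "(a (2*q) = 0 \<and> a (2*q+1) = 0) \<or> a (2*q) * x (2*q) + a (2*q+1) * x (2*q+1) \<noteq> 0"
      if q: "lam+1 \<le> q" "q \<le> (n-1) div 2" for q
    proof -
      let ?f = "\<lambda>j. if j = 2*q \<or> j = 2*q+1 then a j else 0"
      have idx: "2*q \<in> {1..n}" "2*q+1 \<in> {1..n}" using q n2 m_def by auto
      show "(a (2*q) = 0 \<and> a (2*q+1) = 0) \<or> a (2*q) * x (2*q) + a (2*q+1) * x (2*q+1) \<noteq> 0"
      proof (cases "?f \<in> S")
        case True
        then have "lin n ?f x \<noteq> 0" by (rule linS)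
        moreover have "lin n ?f x = (\<Sum>j\<in>{2*q, 2*q+1}. a j * x j)"
          unfolding lin_def
          by (rule sum.mono_neutral_cong_right) (use idx in auto)
        ultimately show ?thesis by simp
      next
        case False
        have "?f \<in> Wf" unfolding Wf_def using q m_def by auto
        then have "\<forall>i\<in>{1..n}. ?f i = 0" using False unfolding S_def by auto
        then have h: "\<forall>i\<in>{1..n}. (if i = 2*q \<or> i = 2*q+1 then a i else 0) = 0" .
        have "a (2*q) = 0" using bspec[OF h idx(1)] by simp
        moreover have "a (2*q+1) = 0" using bspec[OF h idx(2)] by simp
        ultimately show ?thesis by simp
      qed
    qed
    show "diffs_indep n (fam a n lam) x" by (rule indep[OF x n lm2 aL Ln1 lamL hv hw])
  qed
  show ?thesis
    unfolding L_def[symmetric] lam_def[symmetric]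
    using P1 P2 op dn VT P3 by blast
qed


end
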